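(* Let $\mathfrak{G}$ be the Goldman Lie algebra of the closed torus over $\mathbb{Z}$. Then the derived subalgebra $[\mathfrak{G},\mathfrak{G}]$ is the $\mathbb{Z}$-submodule of $\mathfrak{G}$ spanned by the elements $\gcd(i,j)\,a^ib^j$ for $i,j\in\mathbb{Z}\setminus\{0\}$, together with $n\,a^n$ and $n\,b^n$ for $n\in\mathbb{Z}\setminus\{0\}$.
   Context: Let $T^2=\Sigma_{1,0}$ be the closed oriented torus and $\hat\pi$ its set of free homotopy classes of loops, identified with $\pi_1(T^2)\cong\mathbb{Z}^2$; with $a,b$ the standard generators every class is written $a^ib^j$, $(i,j)\in\mathbb{Z}^2$. The Goldman bracket ($[\alpha,\beta]=\sum_{p\in\alpha\cap\beta}\epsilon(p)\,\alpha*_p\beta$ over transverse intersection points $p$, with $\epsilon(p)$ the intersection sign and $\alpha*_p\beta$ the concatenation at $p$, extended bilinearly) is given on the torus by $[a^ib^j,a^kb^l]=(il-jk)\,a^{i+k}b^{j+l}$. The Goldman Lie algebra over $\mathbb{Z}$ is the free abelian group $\mathbb{Z}\hat\pi$ with basis $\hat\pi$ and this bracket, and $[\mathfrak{G},\mathfrak{G}]$ is the $\mathbb{Z}$-span of all brackets. *)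

theory Defs
  imports "HOL-Library.Poly_Mapping"
begin

text \<open>The Goldman Lie algebra of the torus over the integers: the free abelian group
  with basis the free homotopy classes a^i b^j, identified with (i,j) in Z x Z.\<close>

type_synonym goldman = "(int \<times> int) \<Rightarrow>\<^sub>0 int"

definition cls :: "int \<Rightarrow> int \<Rightarrow> goldman" where
  "cls i j = Poly_Mapping.single (i, j) 1"

definition zsmult :: "int \<Rightarrow> goldman \<Rightarrow> goldman" where
  "zsmult c x = Poly_Mapping.map (\<lambda>v. c * v) x"

text \<open>Goldman bracket: bilinear extension of [a^i b^j, a^k b^l] = (il - jk) a^(i+k) b^(j+l).\<close>
definition gbracket :: "goldman \<Rightarrow> goldman \<Rightarrow> goldman" where
  "gbracket x y =
     (\<Sum>p\<in>Poly_Mapping.keys x. \<Sum>q\<in>Poly_Mapping.keys y.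
        Poly_Mapping.single (fst p + fst q, snd p + snd q)
          (Poly_Mapping.lookup x p * Poly_Mapping.lookup y q * (fst p * snd q - snd p * fst q)))"

inductive_set zspan :: "goldman set \<Rightarrow> goldman set" for S where
  zspan_zero: "0 \<in> zspan S"
| zspan_gen: "s \<in> S \<Longrightarrow> s \<in> zspan S"
| zspan_add: "x \<in> zspan S \<Longrightarrow> y \<in> zspan S \<Longrightarrow> x + y \<in> zspan S"
| zspan_diff: "x \<in> zspan S \<Longrightarrow> y \<in> zspan S \<Longrightarrow> x - y \<in> zspan S"

definition derived :: "goldman set" where
  "derived = zspan {gbracket x y | x y. True}"

end

theory Submission
  imports Defs
begin

lemma zsmult_cls: "zsmult c (cls i j) = Poly_Mapping.single (i,j) c"
  unfolding zsmult_def cls_def by simp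

lemma br_single: "gbracket (Poly_Mapping.single (i,j) 1) (Poly_Mapping.single (k,l) 1)
   = Poly_Mapping.single (i+k, j+l) (i*l - j*k)"
  unfolding gbracket_def by simp

lemma zspan_sum: "finite A \<Longrightarrow> (\<And>a. a \<in> A \<Longrightarrow> f a \<in> zspan S) \<Longrightarrow> sum f A \<in> zspan S"
  by (induction A rule: finite_induct) (auto intro: zspan.intros)

lemma zspan_mult_nat: "Poly_Mapping.single p g \<in> zspan S \<Longrightarrow>
   Poly_Mapping.single p (int n * g) \<in> zspan S"
proof (induction n)
  case 0 then show ?case by (simp add: zspan.zspan_zero)
next
  case (Suc n)
  have "Poly_Mapping.single p (int (Suc n) * g) = Poly_Mapping.single p (int n * g) + Poly_Mapping.single p g"
    by (simp add: single_add[symmetric] algebra_simps)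
  then show ?case using Suc by (simp add: zspan.zspan_add)
qed

lemma zspan_mult: assumes "Poly_Mapping.single p g \<in> zspan S"
  shows "Poly_Mapping.single p (k * g) \<in> zspan S"
proof (cases "k \<ge> 0")
  case True
  then obtain n where "k = int n" by (metis nonneg_eq_int)
  then show ?thesis using zspan_mult_nat[OF assms] by simp
next
  case False
  define n where "n = nat (- k)"
  have n: "k = - int n" using False unfolding n_def by simp
  have "Poly_Mapping.single p (k * g) = 0 - Poly_Mapping.single p (int n * g)"
    using n by (simp add: single_uminus[symmetric])
  moreover have "0 - Poly_Mapping.single p (int n * g) \<in> zspan S"
    using zspan_mult_nat[OF assms, of n] by (intro zspan.zspan_diff zspan.zspan_zero)
  ultimately show ?thesis by simp
qed

lemma zspan_mono0: "x \<in> zspan S \<Longrightarrow> S \<subseteq> zspan S' \<Longrightarrow> x \<in> zspan S'"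
  by (induction x rule: zspan.induct) (auto intro: zspan.intros)

lemma zspan_mono: "S \<subseteq> zspan S' \<Longrightarrow> x \<in> zspan S \<Longrightarrow> x \<in> zspan S'"
  using zspan_mono0 by blast

theorem mainTheorem4:
  shows "derived =
    zspan ({zsmult (gcd i j) (cls i j) | i j. i \<noteq> 0 \<and> j \<noteq> 0}
         \<union> {zsmult n (cls n 0) | n. n \<noteq> 0}
         \<union> {zsmult n (cls 0 n) | n. n \<noteq> 0})" (is "_ = zspan ?G")
proof
  have key: "Poly_Mapping.single (m,n) c \<in> zspan ?G" if dv: "gcd m n dvd c" for m n c
  proof -
    obtain k where k: "c = gcd m n * k" using dv by (auto elim: dvdE)
    consider "m \<noteq> 0" "n \<noteq> 0" | "m \<noteq> 0" "n = 0" | "m = 0" "n \<noteq> 0" | "m = 0" "n = 0" by blast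
    then show ?thesis
    proof cases
      case 1
      hence "Poly_Mapping.single (m,n) (gcd m n) \<in> zspan ?G"
        by (intro zspan.zspan_gen) (auto simp: zsmult_cls)
      from zspan_mult[OF this, of k] show ?thesis using k by (simp add: mult.commute)
    next
      case 2
      hence g: "Poly_Mapping.single (m,n) m \<in> zspan ?G"
        by (intro zspan.zspan_gen) (auto simp: zsmult_cls)
      have "c = m * (sgn m * k)" using k 2 by (simp add: abs_sgn mult.commute mult.left_commute)
      then show ?thesis using zspan_mult[OF g, of "sgn m * k"] by (simp add: mult.commute)
    next
      case 3
      hence g: "Poly_Mapping.single (m,n) n \<in> zspan ?G"
        by (intro zspan.zspan_gen) (auto simp: zsmult_cls)
      have "c = n * (sgn n * k)" using k 3 by (simp add: abs_sgn mult.commute mult.left_commute)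
      then show ?thesis using zspan_mult[OF g, of "sgn n * k"] by (simp add: mult.commute)
    next
      case 4
      then show ?thesis using k by (simp add: zspan.zspan_zero)
    qed
  qed
  have brs: "gbracket x y \<in> zspan ?G" for x y
    unfolding gbracket_def
  proof (intro zspan_sum)
    fix p q :: "int \<times> int"
    have "gcd (fst p + fst q) (snd p + snd q) dvd (fst p * snd q - snd p * fst q)"
    proof -
      have "fst p * snd q - snd p * fst q = fst p * (snd p + snd q) - snd p * (fst p + fst q)"
        by (simp add: algebra_simps)
      then show ?thesis by simp
    qed
    then show "Poly_Mapping.single (fst p + fst q, snd p + snd q)
          (Poly_Mapping.lookup x p * Poly_Mapping.lookup y q * (fst p * snd q - snd p * fst q)) \<in> zspan ?G"
      by (intro key) simp
  qed auto
  show "derived \<subseteq> zspan ?G"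
    unfolding derived_def
  proof
    fix z assume "z \<in> zspan {gbracket x y | x y. True}"
    then show "z \<in> zspan ?G" by (rule zspan_mono[rotated]) (use brs in auto)
  qed
  have gens: "?G \<subseteq> derived"
  proof
    fix z assume "z \<in> ?G"
    then consider (a) i j where "z = Poly_Mapping.single (i,j) (gcd i j)"
      | (b) n where "z = Poly_Mapping.single (n,0) n"
      | (c) n where "z = Poly_Mapping.single (0,n) n"
      by (auto simp: zsmult_cls)
    then show "z \<in> derived"
    proof cases
      case a
      obtain u v where uv: "u * i + v * j = gcd i j" using bezout_int by blast
      have "gbracket (Poly_Mapping.single (v, -u) 1) (Poly_Mapping.single (i - v, j + u) 1) = z"
        unfolding br_single a using uv by (simp add: algebra_simps)
      then show ?thesis unfolding derived_def by (auto intro: zspan.zspan_gen)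
    next
      case b
      have "gbracket (Poly_Mapping.single (0, -1) 1) (Poly_Mapping.single (n, 1) 1) = z"
        unfolding br_single b by simp
      then show ?thesis unfolding derived_def by (auto intro: zspan.zspan_gen)
    next
      case c
      have "gbracket (Poly_Mapping.single (1, 0) 1) (Poly_Mapping.single (-1, n) 1) = z"
        unfolding br_single c by simp
      then show ?thesis unfolding derived_def by (auto intro: zspan.zspan_gen)
    qed
  qed
  show "zspan ?G \<subseteq> derived"
  proof
    fix z assume "z \<in> zspan ?G"
    then show "z \<in> derived" unfolding derived_def
      by (rule zspan_mono[rotated]) (use gens in \<open>auto simp: derived_def\<close>)
  qed
qed

end
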